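(* Let $O$ be a unitary operator and $P$ a self-adjoint projection on a finite-dimensional Hilbert space such that $P(O-\mathrm{Id})=O-\mathrm{Id}$ and $[P,O]=0$. Then for any two density matrices $\rho,\sigma$, $$\sqrt{F}(\rho,\sigma)-\sqrt{F}(\rho,O\sigma O^\dagger)\leq 2\sqrt{\mathrm{tr}(P\rho)\,\mathrm{tr}(P\sigma)}.$$
   Context: $\sqrt{F}(\rho,\sigma)=\mathrm{tr}\sqrt{\rho^{1/2}\sigma\rho^{1/2}}$ is the root fidelity of density matrices. *)

theory Defs
  imports "HOL-Analysis.Analysis"
begin

definition adj :: "complex^'n^'m \<Rightarrow> complex^'m^'n" where
  "adj A = (\<chi> i j. cnj (A $ j $ i))"

definition mtrace :: "complex^'n^'n \<Rightarrow> complex" where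
  "mtrace A = (\<Sum>i\<in>UNIV. A $ i $ i)"

definition unitary :: "complex^'n^'n \<Rightarrow> bool" where
  "unitary U \<longleftrightarrow> adj U ** U = mat 1 \<and> U ** adj U = mat 1"

definition hermitian :: "complex^'n^'n \<Rightarrow> bool" where
  "hermitian A \<longleftrightarrow> adj A = A"

definition psd :: "complex^'n^'n \<Rightarrow> bool" where
  "psd A \<longleftrightarrow> hermitian A \<and>
     (\<forall>x::complex^'n. let q = (\<Sum>i\<in>UNIV. cnj (x $ i) * (A *v x) $ i) in Im q = 0 \<and> 0 \<le> Re q)"

definition density :: "complex^'n^'n \<Rightarrow> bool" where
  "density \<rho> \<longleftrightarrow> psd \<rho> \<and> mtrace \<rho> = 1"

definition proj :: "complex^'n^'n \<Rightarrow> bool" where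
  "proj P \<longleftrightarrow> P ** P = P \<and> adj P = P"

definition msqrt :: "complex^'n^'n \<Rightarrow> complex^'n^'n" where
  "msqrt A = (THE B. psd B \<and> B ** B = A)"

definition root_fid :: "complex^'n^'n \<Rightarrow> complex^'n^'n \<Rightarrow> real" where
  "root_fid \<rho> \<sigma> = Re (mtrace (msqrt (msqrt \<rho> ** \<sigma> ** msqrt \<rho>)))"

end

theory Submission
  imports Defs
begin
definition cinner :: "complex^'n \<Rightarrow> complex^'n \<Rightarrow> complex" where
  "cinner x y = (\<Sum>i\<in>UNIV. cnj (x $ i) * y $ i)"

lemma adj_nth[simp]: "adj A $ i $ j = cnj (A $ j $ i)"
  by (simp add: adj_def)

lemma adj_adj[simp]: "adj (adj A) = A"
  by (simp add: vec_eq_iff)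

lemma adj_mult: "adj (A ** B) = adj B ** adj A"
  by (simp add: vec_eq_iff matrix_matrix_mult_def mult.commute)

lemma adj_mat1[simp]: "adj (mat 1 :: complex^'n^'n) = mat 1"
  by (simp add: vec_eq_iff mat_def)

lemma adj_add: "adj (A + B) = adj A + adj B"
  by (simp add: vec_eq_iff)

lemma adj_diff: "adj (A - B) = adj A - adj B"
  by (simp add: vec_eq_iff)

lemma mtrace_comm: "mtrace (A ** B) = mtrace (B ** (A::complex^'n^'n))"
proof -
  have "mtrace (A ** B) = (\<Sum>i\<in>UNIV. \<Sum>k\<in>UNIV. A$i$k * B$k$i)"
    unfolding mtrace_def matrix_matrix_mult_def by simp
  also have "\<dots> = (\<Sum>k\<in>UNIV. \<Sum>i\<in>UNIV. A$i$k * B$k$i)" by (rule sum.swap)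
  also have "\<dots> = (\<Sum>k\<in>UNIV. \<Sum>i\<in>UNIV. B$k$i * A$i$k)" by (simp only: mult.commute)
  also have "\<dots> = mtrace (B ** A)"
    unfolding mtrace_def matrix_matrix_mult_def by simp
  finally show ?thesis .
qed

lemma mtrace_diff: "mtrace (A - B) = mtrace A - mtrace B"
  by (simp add: mtrace_def sum_subtractf)

lemma cinner_adj: "cinner x (A *v y) = cinner (adj A *v x) y"
proof -
  have "cinner x (A *v y) = (\<Sum>i\<in>UNIV. cnj (x$i) * (\<Sum>j\<in>UNIV. A$i$j * y$j))"
    by (simp add: cinner_def matrix_vector_mult_def)
  also have "\<dots> = (\<Sum>i\<in>UNIV. \<Sum>j\<in>UNIV. cnj (x$i) * A$i$j * y$j)"
    by (simp add: sum_distrib_left mult.assoc)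
  also have "\<dots> = (\<Sum>j\<in>UNIV. \<Sum>i\<in>UNIV. cnj (x$i) * A$i$j * y$j)" by (rule sum.swap)
  also have "\<dots> = (\<Sum>j\<in>UNIV. (\<Sum>i\<in>UNIV. cnj (x$i) * A$i$j) * y$j)"
    by (simp add: sum_distrib_right)
  also have "\<dots> = cinner (adj A *v x) y"
    unfolding cinner_def matrix_vector_mult_def by (simp add: mult.commute)
  finally show ?thesis .
qed

lemma cinner_cnj: "cinner y x = cnj (cinner x y)"
  unfolding cinner_def cnj_sum by (intro sum.cong refl) (simp only: complex_cnj_mult complex_cnj_cnj mult.commute)

lemma norm_vec_sq: "(norm (x::'a::real_normed_vector^'n))^2 = (\<Sum>i\<in>UNIV. (norm (x$i))^2)"
  unfolding norm_vec_def L2_set_def by (rule real_sqrt_pow2) (simp add: sum_nonneg)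
lemma cinner_self: "cinner x x = of_real ((norm x)^2)"
proof -
  have "cinner x x = (\<Sum>i\<in>UNIV. of_real ((cmod (x$i))^2))"
    unfolding cinner_def by (intro sum.cong refl) (metis complex_norm_square mult.commute of_real_power)
  also have "\<dots> = of_real (\<Sum>i\<in>UNIV. (cmod (x$i))^2)" by (rule of_real_sum[symmetric])
  also have "(\<Sum>i\<in>UNIV. (cmod (x$i))^2) = (norm x)^2"
    by (rule norm_vec_sq[symmetric])
  finally show ?thesis .
qed

lemma cinner_add_right: "cinner x (y + z) = cinner x y + cinner x z"
  by (simp add: cinner_def distrib_left sum.distrib)
lemma cinner_add_left: "cinner (x + y) z = cinner x z + cinner y z"
  by (simp add: cinner_def distrib_right sum.distrib)
lemma cinner_diff_right: "cinner x (y - z) = cinner x y - cinner x z"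
  by (simp add: cinner_def right_diff_distrib sum_subtractf)
lemma cinner_diff_left: "cinner (x - y) z = cinner x z - cinner y z"
  by (simp add: cinner_def left_diff_distrib sum_subtractf)
lemma cinner_scale_right: "cinner x (c *s y) = c * cinner x y"
  by (simp add: cinner_def sum_distrib_left mult_ac)
lemma cinner_scale_left: "cinner (c *s x) y = cnj c * cinner x y"
  by (simp add: cinner_def sum_distrib_left mult_ac)
lemma cinner_zero_left[simp]: "cinner 0 y = 0" by (simp add: cinner_def)
lemma cinner_zero_right[simp]: "cinner x 0 = 0" by (simp add: cinner_def)

lemma sum_norm_le_norm:
  fixes x y :: "'a::real_normed_vector ^'n"
  shows "(\<Sum>k\<in>UNIV. norm (x$k) * norm (y$k)) \<le> norm x * norm y"
proof -
  let ?a = "(\<chi> k. norm (x$k)) :: real^'n" and ?b = "(\<chi> k. norm (y$k)) :: real^'n"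
  have "inner ?a ?b \<le> norm ?a * norm ?b" by (rule norm_cauchy_schwarz)
  moreover have "inner ?a ?b = (\<Sum>k\<in>UNIV. norm (x$k) * norm (y$k))"
    by (simp add: inner_vec_def)
  moreover have "norm ?a = norm x" "norm ?b = norm y"
    by (simp_all add: norm_vec_def)
  ultimately show ?thesis by simp
qed

lemma cinner_cs: "cmod (cinner x y) \<le> norm x * norm y"
proof -
  have "cmod (cinner x y) \<le> (\<Sum>i\<in>UNIV. cmod (cnj (x $ i) * y $ i))"
    unfolding cinner_def by (rule norm_sum)
  also have "\<dots> = (\<Sum>i\<in>UNIV. norm (x $ i) * norm (y $ i))"
    by (simp add: norm_mult)
  also have "\<dots> \<le> norm x * norm y" by (rule sum_norm_le_norm)
  finally show ?thesis .
qed


lemma inner_cinner: "inner x y = Re (cinner x y)"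
  by (simp add: inner_vec_def cinner_def inner_complex_def Re_sum)

lemma vec_scaleR_nth: "(r *\<^sub>R y) $ i = of_real r * (y $ i :: complex)"
  unfolding vector_scaleR_component by (rule scaleR_conv_of_real)
lemma cinner_scaleR_right: "cinner x (r *\<^sub>R y) = of_real r * cinner x y"
  unfolding cinner_def vec_scaleR_nth by (simp add: sum_distrib_left mult_ac)
lemma cinner_scaleR_left: "cinner (r *\<^sub>R x) y = of_real r * cinner x y"
  unfolding cinner_def vec_scaleR_nth by (simp add: sum_distrib_left mult_ac)

lemma cinner_self_eq_0: "cinner x x = 0 \<longleftrightarrow> x = 0"
  unfolding cinner_self of_real_eq_0_iff by simp

lemma cinner_self_1: "cinner x x = 1 \<longleftrightarrow> norm x = 1"
proof -
  have "cinner x x = 1 \<longleftrightarrow> norm x ^ 2 = 1" unfolding cinner_self of_real_eq_1_iff ..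
  also have "\<dots> \<longleftrightarrow> norm x = 1" by (smt (verit) norm_ge_zero power2_eq_1_iff)
  finally show ?thesis .
qed

lemma exists_orth:
  fixes v :: "'n::finite \<Rightarrow> complex^'n"
  assumes "J \<noteq> UNIV"
  shows "\<exists>x. cinner x x = 1 \<and> (\<forall>j\<in>J. cinner (v j) x = 0)"
proof -
  define S where "S = v ` J \<union> (\<lambda>j. \<i> *s v j) ` J"
  have fin: "finite S" unfolding S_def by simp
  have cJ: "card J < CARD('n)" using assms by (simp add: psubset_card_mono psubset_eq)
  have "card S \<le> card (v ` J) + card ((\<lambda>j. \<i> *s v j) ` J)" unfolding S_def by (rule card_Un_le)
  also have "\<dots> \<le> card J + card J" by (intro add_mono card_image_le) simp_all
  finally have "card S \<le> card J + card J" .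
  hence cS: "card S < DIM(complex^'n)" using cJ by simp
  have "span S \<noteq> UNIV"
  proof
    assume "span S = UNIV"
    hence "dim (UNIV :: (complex^'n) set) \<le> card S" using dim_le_card[of UNIV S] fin by simp
    thus False using cS by simp
  qed
  then obtain a where a: "a \<noteq> 0" "\<forall>x\<in>span S. inner a x = 0"
    using span_not_UNIV_orthogonal by blast
  have orth: "cinner (v j) a = 0" if "j \<in> J" for j
  proof -
    have "v j \<in> span S" "\<i> *s v j \<in> span S" using that unfolding S_def by (auto intro: span_base)
    hence "inner a (v j) = 0" "inner a (\<i> *s v j) = 0" using a by auto
    hence "Re (cinner a (v j)) = 0" "Re (cinner a (\<i> *s v j)) = 0"
      by (simp_all add: inner_cinner)
    hence "Re (cinner (v j) a) = 0" "Re (cinner (\<i> *s v j) a) = 0"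
      by (subst cinner_cnj, simp)+
    hence "Re (cinner (v j) a) = 0" "Im (cinner (v j) a) = 0" by (simp_all add: cinner_scale_left)
    thus ?thesis by (simp add: complex_eq_iff)
  qed
  define x where "x = (1 / norm a) *\<^sub>R a"
  have "norm x = 1" unfolding x_def using a(1) by simp
  hence "cinner x x = 1" by (simp add: cinner_self_1)
  moreover have "\<forall>j\<in>J. cinner (v j) x = 0" unfolding x_def using orth by (simp add: cinner_scaleR_right)
  ultimately show ?thesis by blast
qed

lemma cont_cinner:
  fixes f g :: "'a::topological_space \<Rightarrow> complex^'n"
  assumes "continuous_on S f" "continuous_on S g"
  shows "continuous_on S (\<lambda>x. cinner (f x) (g x))"
  unfolding cinner_def
  apply (rule continuous_on_sum)
  apply (rule continuous_on_mult)
  apply (rule continuous_on_cnj)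
  apply (rule continuous_on_component[OF assms(1)])
  apply (rule continuous_on_component[OF assms(2)])
  done

lemma cont_mv:
  fixes A :: "complex^'n^'m"
  assumes "continuous_on S f" shows "continuous_on S (\<lambda>x. A *v f x)"
  unfolding matrix_vector_mult_def
  apply (rule continuous_on_vec_lambda)
  apply (rule continuous_on_sum)
  apply (rule continuous_on_mult)
  apply (rule continuous_on_const)
  apply (rule continuous_on_component[OF assms])
  done

lemma mv_scale: "A *v (c *s x) = c *s (A *v (x::complex^'n))"
  by (simp add: vec_eq_iff matrix_vector_mult_def sum_distrib_left mult_ac)

lemma mv_scaleR: "A *v (c *\<^sub>R x) = c *\<^sub>R (A *v (x::complex^'n))"
  unfolding vec_eq_iff matrix_vector_mult_def vec_lambda_beta vec_scaleR_nth
  by (simp add: sum_distrib_left mult_ac)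

lemma cinner_herm: "hermitian A \<Longrightarrow> cinner x (A *v y) = cinner (A *v x) y"
  by (metis cinner_adj hermitian_def)

lemma quad_zero:
  fixes a b :: real
  assumes "\<And>t. 2*t*a + t^2*b \<le> 0"
  shows "a = 0"
proof (rule ccontr)
  assume "a \<noteq> 0"
  define c where "c = \<bar>b\<bar> + 1"
  have c: "c > 0" "b \<le> c" "-c \<le> b" unfolding c_def by auto
  define t where "t = a / (2*c)"
  have "t^2 * (-c) \<le> t^2 * b" by (rule mult_left_mono[OF c(3)]) simp
  moreover have "t^2*c = a^2/(4*c)" unfolding t_def using c by (simp add: field_simps power2_eq_square)
  moreover have "2*t*a = a^2/c" unfolding t_def using c by (simp add: field_simps power2_eq_square)
  moreover have "a^2/c > 0" using c \<open>a \<noteq> 0\<close> by simp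
  moreover have "a^2/(4*c) < a^2/c" using c \<open>a \<noteq> 0\<close> by (simp add: divide_strict_left_mono)
  ultimately have "2*t*a + t^2*b > 0" by linarith
  thus False using assms[of t] by linarith
qed

lemma eig_step:
  fixes A :: "complex^'n^'n" and v :: "'n \<Rightarrow> complex^'n"
  assumes herm: "hermitian A" and J: "J \<noteq> UNIV"
    and eig: "\<And>j. j \<in> J \<Longrightarrow> A *v v j = of_real (d j) *s v j"
  shows "\<exists>x \<mu>. cinner x x = 1 \<and> (\<forall>j\<in>J. cinner (v j) x = 0) \<and> A *v x = of_real \<mu> *s x"
proof -
  define K where "K = {x. cinner x x = 1 \<and> (\<forall>j\<in>J. cinner (v j) x = 0)}"
  define f where "f x = Re (cinner x (A *v x))" for x
  have Kne: "K \<noteq> {}" using exists_orth[OF J, of v] unfolding K_def by blast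
  have "closed K"
  proof -
    have "K = {x. cinner x x = 1} \<inter> (\<Inter>j\<in>J. {x. cinner (v j) x = 0})" unfolding K_def by auto
    moreover have "closed {x. cinner x x = 1}"
      by (rule closed_Collect_eq[OF cont_cinner[OF continuous_on_id continuous_on_id] continuous_on_const])
    moreover have "closed {x. cinner (v j) x = 0}" for j
      by (rule closed_Collect_eq[OF cont_cinner[OF continuous_on_const continuous_on_id] continuous_on_const])
    ultimately show ?thesis by (auto intro!: closed_Int closed_INT)
  qed
  moreover have "bounded K"
    by (rule bounded_subset[OF bounded_cball[of 0 1]]) (auto simp: K_def cinner_self_1)
  ultimately have "compact K" by (simp add: compact_eq_bounded_closed)
  moreover have "continuous_on K f" unfolding f_def
    by (rule continuous_on_Re[OF cont_cinner[OF continuous_on_id cont_mv[OF continuous_on_id]]])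
  ultimately have "\<exists>x\<in>K. \<forall>y\<in>K. f y \<le> f x"
    using continuous_attains_sup[of K f] Kne by simp
  then obtain x0 where x0: "x0 \<in> K" and mx: "\<And>y. y \<in> K \<Longrightarrow> f y \<le> f x0"
    by blast
  define \<mu> where "\<mu> = f x0"
  have fscale: "f (r *\<^sub>R z) = r^2 * f z" for r z
    unfolding f_def by (simp add: mv_scaleR cinner_scaleR_left cinner_scaleR_right power2_eq_square)
  have key1: "f z \<le> \<mu> * Re (cinner z z)" if z: "\<forall>j\<in>J. cinner (v j) z = 0" for z
  proof (cases "z = 0")
    case True thus ?thesis by (simp add: f_def)
  next
    case False
    define n where "n = norm z"
    have n: "n > 0" unfolding n_def using False by simp
    define w where "w = (1/n) *\<^sub>R z"
    have "norm w = 1" unfolding w_def n_def using False by simp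
    hence "cinner w w = 1" using cinner_self_1[of w] by simp
    moreover have "\<forall>j\<in>J. cinner (v j) w = 0" unfolding w_def using z by (simp add: cinner_scaleR_right)
    ultimately have "w \<in> K" unfolding K_def by blast
    hence fle: "f w \<le> \<mu>" using mx unfolding \<mu>_def by blast
    have fw: "f w = (1/n)^2 * f z" unfolding w_def by (rule fscale)
    have Rez: "Re (cinner z z) = n^2" unfolding n_def cinner_self Re_complex_of_real ..
    have "f z = n^2 * f w" unfolding fw using n by (simp add: power_divide)
    also have "\<dots> \<le> n^2 * \<mu>" using fle by (rule mult_left_mono) simp
    also have "\<dots> = \<mu> * Re (cinner z z)" unfolding Rez by (rule mult.commute)
    finally show ?thesis .
  qed
  have x0K: "cinner x0 x0 = 1" "\<forall>j\<in>J. cinner (v j) x0 = 0" using x0 unfolding K_def by auto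
  have key2: "Re (cinner y (A *v x0)) = 0"
    if y: "\<forall>j\<in>J. cinner (v j) y = 0" "cinner x0 y = 0" for y
  proof (rule quad_zero)
    fix t :: real
    define z where "z = x0 + t *\<^sub>R y"
    have "\<forall>j\<in>J. cinner (v j) z = 0" unfolding z_def using y x0K
      by (simp add: cinner_add_right cinner_scaleR_right)
    hence le: "f z \<le> \<mu> * Re (cinner z z)" by (rule key1)
    have yx: "cinner y x0 = 0" using y(2) cinner_cnj[of y x0] by simp
    have "cinner z z = cinner x0 x0 + of_real t * cinner x0 y + of_real t * cinner y x0
         + of_real t * (of_real t * cinner y y)" unfolding z_def
      unfolding cinner_add_right cinner_add_left cinner_scaleR_right cinner_scaleR_left
      by (simp add: algebra_simps)
    hence "cinner z z = 1 + of_real (t^2) * cinner y y"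
      using x0K y(2) yx by (simp add: power2_eq_square)
    hence zz: "Re (cinner z z) = 1 + t^2 * Re (cinner y y)" by simp
    have c1: "cinner x0 (A *v y) = cnj (cinner y (A *v x0))"
      using cinner_herm[OF herm, of x0 y] cinner_cnj[of "A *v x0" y] by simp
    have Az: "A *v z = A *v x0 + t *\<^sub>R (A *v y)" unfolding z_def
      by (simp only: matrix_vector_right_distrib mv_scaleR)
    have "cinner z (A *v z) = cinner x0 (A *v x0) + of_real t * cinner x0 (A *v y)
        + (of_real t * cinner y (A *v x0) + of_real t * (of_real t * cinner y (A *v y)))"
      unfolding Az unfolding z_def
      unfolding cinner_add_right cinner_add_left cinner_scaleR_right cinner_scaleR_left
      by (simp add: algebra_simps)
    hence "cinner z (A *v z) = cinner x0 (A *v x0) + of_real t * (cinner x0 (A *v y) + cinner y (A *v x0))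
        + of_real (t^2) * cinner y (A *v y)"
      by (simp add: distrib_left power2_eq_square)
    hence "f z = \<mu> + t * (2 * Re (cinner y (A *v x0))) + t^2 * f y"
      unfolding f_def \<mu>_def using c1 by simp
    with le zz have "\<mu> + t * (2 * Re (cinner y (A *v x0))) + t^2 * f y \<le> \<mu> * (1 + t^2 * Re (cinner y y))"
      by simp
    thus "2 * t * Re (cinner y (A *v x0)) + t^2 * (f y - \<mu> * Re (cinner y y)) \<le> 0"
      by (simp add: algebra_simps)
  qed
  define m where "m = cinner x0 (A *v x0)"
  have mreal: "m = of_real (Re m)"
  proof -
    have "m = cnj m" unfolding m_def using cinner_herm[OF herm, of x0 x0] cinner_cnj[of "A *v x0" x0]
      by simp
    have i1: "Im m = Im (cnj m)" using arg_cong[OF \<open>m = cnj m\<close>, of Im] .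
    have i2: "Im (cnj m) = - Im m" by simp
    have "Im m = 0" using i1 i2 by linarith
    thus ?thesis by (simp add: complex_eq_iff)
  qed
  define y where "y = A *v x0 - m *s x0"
  have y1: "cinner x0 y = 0" unfolding y_def m_def using x0K
    by (simp add: cinner_diff_right cinner_scale_right)
  have y2: "\<forall>j\<in>J. cinner (v j) y = 0"
  proof
    fix j assume j: "j \<in> J"
    have "cinner (v j) (A *v x0) = cinner (A *v v j) x0" by (rule cinner_herm[OF herm])
    also have "\<dots> = 0" using eig[OF j] x0K(2) j by (simp add: cinner_scale_left)
    finally show "cinner (v j) y = 0" unfolding y_def using x0K(2) j
      by (simp add: cinner_diff_right cinner_scale_right)
  qed
  have "Re (cinner y (A *v x0)) = 0" using key2[OF y2 y1] .
  moreover have "cinner y (A *v x0) = cinner y y"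
  proof -
    have "A *v x0 = y + m *s x0" unfolding y_def by simp
    moreover have "cinner y x0 = 0" using y1 cinner_cnj[of y x0] by simp
    ultimately show ?thesis by (simp add: cinner_add_right cinner_scale_right)
  qed
  ultimately have "Re (cinner y y) = 0" by simp
  hence "y = 0" using cinner_self[of y] cinner_self_eq_0[of y] by simp
  hence "A *v x0 = of_real (Re m) *s x0" unfolding y_def using mreal by simp
  thus ?thesis using x0K by blast
qed

definition orthonormal_on :: "'a set \<Rightarrow> ('a \<Rightarrow> complex^'n) \<Rightarrow> bool" where
  "orthonormal_on J v \<longleftrightarrow> (\<forall>i\<in>J. \<forall>j\<in>J. cinner (v i) (v j) = (if i = j then 1 else 0))"

lemma eig_extend_aux:
  fixes A :: "complex^'n^'n" and v :: "'n \<Rightarrow> complex^'n"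
  assumes herm: "hermitian A"
  shows "finite K \<Longrightarrow> K = UNIV - J \<Longrightarrow> orthonormal_on J v \<Longrightarrow>
     (\<forall>j\<in>J. A *v v j = of_real (d j) *s v j) \<Longrightarrow>
     \<exists>v' d'. (\<forall>j\<in>J. v' j = v j) \<and> orthonormal_on UNIV v' \<and> (\<forall>j. A *v v' j = of_real (d' j) *s v' j)"
proof (induction K arbitrary: J v d rule: finite_induct)
  case empty
  then have "J = UNIV" by auto
  then show ?case using empty by auto
next
  case (insert k K)
  have kJ: "k \<notin> J" using insert.prems(1) by auto
  hence JU: "J \<noteq> UNIV" by auto
  obtain x \<mu> where x: "cinner x x = 1" "\<forall>j\<in>J. cinner (v j) x = 0" "A *v x = of_real \<mu> *s x"
    using eig_step[OF herm JU, of v d] insert.prems(3) by blast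
  define J' where "J' = insert k J"
  define v1 where "v1 = v(k := x)"
  define d1 where "d1 = d(k := \<mu>)"
  have K': "K = UNIV - J'" using insert.prems(1) insert.hyps(2) unfolding J'_def by auto
  have on1: "orthonormal_on J' v1" unfolding orthonormal_on_def
  proof (intro ballI)
    fix i j assume i: "i \<in> J'" and j: "j \<in> J'"
    show "cinner (v1 i) (v1 j) = (if i = j then 1 else 0)"
    proof (cases "i = k")
      case True
      show ?thesis
      proof (cases "j = k")
        case True
        thus ?thesis using \<open>i = k\<close> x(1) unfolding v1_def by simp
      next
        case False
        hence "j \<in> J" using j unfolding J'_def by simp
        hence "cinner (v j) x = 0" using x(2) by blast
        hence "cinner x (v j) = 0" using cinner_cnj[of x "v j"] by simp
        thus ?thesis using \<open>i = k\<close> False unfolding v1_def by simp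
      qed
    next
      case False
      hence iJ: "i \<in> J" using i unfolding J'_def by simp
      show ?thesis
      proof (cases "j = k")
        case True
        thus ?thesis using False x(2) iJ unfolding v1_def by simp
      next
        case False
        hence "j \<in> J" using j unfolding J'_def by simp
        thus ?thesis using \<open>i \<noteq> k\<close> False iJ insert.prems(2) unfolding v1_def orthonormal_on_def
          by simp
      qed
    qed
  qed
  have eig1: "\<forall>j\<in>J'. A *v v1 j = of_real (d1 j) *s v1 j"
    unfolding J'_def v1_def d1_def using insert.prems(3) x(3) kJ by auto
  obtain v' d' where v': "\<forall>j\<in>J'. v' j = v1 j" "orthonormal_on UNIV v'"
      "\<forall>j. A *v v' j = of_real (d' j) *s v' j"
    using insert.IH[OF K' on1 eig1] by blast
  have "\<forall>j\<in>J. v' j = v j" using v'(1) kJ unfolding J'_def v1_def by auto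
  thus ?case using v' by blast
qed

lemma eig_extend:
  fixes A :: "complex^'n^'n" and v :: "'n \<Rightarrow> complex^'n"
  assumes "hermitian A" "orthonormal_on J v" "\<forall>j\<in>J. A *v v j = of_real (d j) *s v j"
  shows "\<exists>v' d'. (\<forall>j\<in>J. v' j = v j) \<and> orthonormal_on UNIV v' \<and> (\<forall>j. A *v v' j = of_real (d' j) *s v' j)"
  using eig_extend_aux[OF assms(1) _ refl assms(2,3)] by simp

lemma spectral:
  fixes A :: "complex^'n^'n"
  assumes "hermitian A"
  shows "\<exists>(v::'n \<Rightarrow> complex^'n) d. orthonormal_on UNIV v \<and> (\<forall>j. A *v v j = of_real (d j) *s v j)"
  using eig_extend[OF assms, of "{}" undefined undefined] unfolding orthonormal_on_def by blast

definition colmat :: "('n \<Rightarrow> complex^'m) \<Rightarrow> complex^'n^'m" where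
  "colmat v = (\<chi> i j. v j $ i)"

definition diagm :: "('n \<Rightarrow> complex) \<Rightarrow> complex^'n^'n" where
  "diagm d = (\<chi> i j. if i = j then d i else 0)"

lemma if0_mult: "(if P then a else 0) * b = (if P then a * b else (0::complex))" by simp
lemma mult_if0: "b * (if P then a else 0) = (if P then b * a else (0::complex))" by simp

lemma mult_colmat: "M ** colmat w = colmat (\<lambda>j. M *v w j)"
  unfolding colmat_def matrix_matrix_mult_def matrix_vector_mult_def vec_eq_iff by simp

lemma adj_colmat_colmat: "adj (colmat v) ** colmat w = (\<chi> i j. cinner (v i) (w j))"
  unfolding colmat_def matrix_matrix_mult_def cinner_def vec_eq_iff by simp

lemma adj_colmat_mv: "(adj (colmat v) *v x) $ i = cinner (v i) x"
  unfolding colmat_def matrix_vector_mult_def cinner_def by simp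

lemma colmat_mv_axis: "colmat v *v axis j 1 = v j"
  unfolding colmat_def matrix_vector_mult_def axis_def vec_eq_iff
  by (simp add: mult_if0 sum.delta')

lemma unitary_colmat:
  assumes "orthonormal_on UNIV v" shows "unitary (colmat v)"
proof -
  have "adj (colmat v) ** colmat v = mat 1"
    unfolding adj_colmat_colmat mat_def using assms unfolding orthonormal_on_def
    by (simp add: vec_eq_iff)
  moreover hence "colmat v ** adj (colmat v) = mat 1" using matrix_left_right_inverse by blast
  ultimately show ?thesis unfolding unitary_def by blast
qed

lemma colmat_diagm: "colmat v ** diagm d = colmat (\<lambda>j. d j *s v j)"
  unfolding colmat_def diagm_def matrix_matrix_mult_def vec_eq_iff
  by (simp add: mult_if0 sum.delta' mult.commute)

lemma diagm_mult: "diagm a ** diagm b = diagm (\<lambda>i. a i * b i)"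
  unfolding diagm_def matrix_matrix_mult_def vec_eq_iff
  by (simp add: mult_if0 if0_mult sum.delta)

lemma diagm_mv: "diagm d *v x = (\<chi> i. d i * x $ i)"
  unfolding diagm_def matrix_vector_mult_def vec_eq_iff
  by (simp add: if0_mult sum.delta)

lemma adj_diagm: "adj (diagm d) = diagm (\<lambda>i. cnj (d i))"
  unfolding diagm_def adj_def vec_eq_iff by simp

lemma unitary_cancel:
  assumes "unitary U" "A ** U = B ** U" shows "A = B"
proof -
  have "A = A ** (U ** adj U)" using assms(1) unfolding unitary_def by simp
  also have "\<dots> = (B ** U) ** adj U" using assms(2) by (simp add: matrix_mul_assoc)
  also have "\<dots> = B" using assms(1) unfolding unitary_def by (simp add: matrix_mul_assoc[symmetric])
  finally show ?thesis .
qed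

lemma psd_iff: "psd A \<longleftrightarrow> hermitian A \<and> (\<forall>x. Im (cinner x (A *v x)) = 0 \<and> 0 \<le> Re (cinner x (A *v x)))"
  unfolding psd_def cinner_def Let_def ..

lemma psd_herm: "psd A \<Longrightarrow> hermitian A"
  unfolding psd_iff by blast

lemma psd_adj: "psd A \<Longrightarrow> adj A = A"
  using psd_herm unfolding hermitian_def by blast

lemma psd_quad: "psd A \<Longrightarrow> Im (cinner x (A *v x)) = 0 \<and> 0 \<le> Re (cinner x (A *v x))"
  unfolding psd_iff by blast

lemma unitary_left: "unitary U \<Longrightarrow> adj U ** (U ** X) = X"
  unfolding unitary_def by (simp add: matrix_mul_assoc)

lemma unitary_right: "unitary U \<Longrightarrow> U ** (adj U ** X) = X"
  unfolding unitary_def by (simp add: matrix_mul_assoc)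

lemma unitary_adj: "unitary U \<Longrightarrow> unitary (adj U)"
  unfolding unitary_def by simp

lemma unitary_mult: "unitary U \<Longrightarrow> unitary V \<Longrightarrow> unitary (U ** V)"
  unfolding unitary_def adj_mult
  by (simp add: matrix_mul_assoc[symmetric]) (simp add: matrix_mul_assoc)

lemma psd_conj:
  assumes "psd B" shows "psd (Y ** B ** adj Y)"
proof -
  have h: "adj B = B" using psd_adj[OF assms] .
  have "adj (Y ** B ** adj Y) = Y ** B ** adj Y"
    unfolding adj_mult adj_adj h by (simp add: matrix_mul_assoc)
  moreover have "Im (cinner x ((Y ** B ** adj Y) *v x)) = 0 \<and> 0 \<le> Re (cinner x ((Y ** B ** adj Y) *v x))" for x
  proof -
    have "(Y ** B ** adj Y) *v x = Y *v (B *v (adj Y *v x))"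
      unfolding matrix_vector_mul_assoc matrix_mul_assoc by (rule refl)
    hence "cinner x ((Y ** B ** adj Y) *v x) = cinner (adj Y *v x) (B *v (adj Y *v x))"
      using cinner_adj[of x Y] by simp
    thus ?thesis using psd_quad[OF assms] by simp
  qed
  ultimately show ?thesis unfolding psd_iff hermitian_def by blast
qed

lemma psd_diagm:
  assumes "\<And>i. 0 \<le> s i" shows "psd (diagm (\<lambda>i. complex_of_real (s i)))"
proof -
  have "adj (diagm (\<lambda>i. complex_of_real (s i))) = diagm (\<lambda>i. complex_of_real (s i))"
    unfolding adj_diagm by simp
  moreover have "Im (cinner x (diagm (\<lambda>i. complex_of_real (s i)) *v x)) = 0 \<and>
      0 \<le> Re (cinner x (diagm (\<lambda>i. complex_of_real (s i)) *v x))" for x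
  proof -
    have "cinner x (diagm (\<lambda>i. complex_of_real (s i)) *v x) = (\<Sum>i\<in>UNIV. of_real (s i * (cmod (x$i))^2))"
      unfolding cinner_def diagm_mv vec_lambda_beta
    proof (intro sum.cong refl)
      fix i
      have e1: "complex_of_real (s i * (cmod (x$i))^2) = of_real (s i) * (x$i * cnj (x$i))"
        by (simp only: of_real_mult complex_norm_square)
      have e2: "cnj (x $ i) * (complex_of_real (s i) * x $ i) = of_real (s i) * (x$i * cnj (x$i))"
        by (simp only: mult_ac)
      show "cnj (x $ i) * (complex_of_real (s i) * x $ i) = complex_of_real (s i * (cmod (x$i))^2)"
        by (rule trans[OF e2 e1[symmetric]])
    qed
    also have "\<dots> = of_real (\<Sum>i\<in>UNIV. s i * (cmod (x$i))^2)" by (rule of_real_sum[symmetric])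
    finally show ?thesis using assms by (simp add: sum_nonneg)
  qed
  ultimately show ?thesis unfolding psd_iff hermitian_def by blast
qed

lemma herm_decomp:
  fixes A :: "complex^'n^'n" and v :: "'n \<Rightarrow> complex^'n"
  assumes on: "orthonormal_on UNIV v" and eig: "\<forall>j. A *v v j = of_real (d j) *s v j"
  shows "A = colmat v ** diagm (\<lambda>j. of_real (d j)) ** adj (colmat v)"
proof (rule unitary_cancel[OF unitary_colmat[OF on]])
  have u: "unitary (colmat v)" by (rule unitary_colmat[OF on])
  have "A ** colmat v = colmat (\<lambda>j. of_real (d j) *s v j)" unfolding mult_colmat using eig by simp
  also have "\<dots> = colmat v ** diagm (\<lambda>j. of_real (d j))" by (simp add: colmat_diagm)
  also have "\<dots> = colmat v ** diagm (\<lambda>j. of_real (d j)) ** adj (colmat v) ** colmat v"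
    using u unfolding unitary_def by (simp add: matrix_mul_assoc[symmetric])
  finally show "A ** colmat v = colmat v ** diagm (\<lambda>j. of_real (d j)) ** adj (colmat v) ** colmat v" .
qed

lemma psd_eig_nonneg:
  assumes "psd A" "orthonormal_on UNIV v" "A *v v j = of_real (d j) *s v j"
  shows "0 \<le> d j"
proof -
  have "cinner (v j) (v j) = 1" using assms(2) unfolding orthonormal_on_def by simp
  hence "cinner (v j) (A *v v j) = of_real (d j)" using assms(3) by (simp add: cinner_scale_right)
  thus ?thesis using psd_quad[OF assms(1), of "v j"] by simp
qed

lemma diagm_mult2: "diagm a ** (diagm b ** X) = diagm (\<lambda>i. a i * b i) ** X"
  by (simp add: matrix_mul_assoc diagm_mult)

lemma sqrt_exists:
  fixes A :: "complex^'n^'n"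
  assumes "psd A" shows "\<exists>B. psd B \<and> B ** B = A"
proof -
  obtain v :: "'n \<Rightarrow> complex^'n" and d where on: "orthonormal_on UNIV v"
    and eig: "\<forall>j. A *v v j = of_real (d j) *s v j"
    using spectral[OF psd_herm[OF assms]] by blast
  have d0: "0 \<le> d j" for j using psd_eig_nonneg[OF assms on, of j d] eig by blast
  define U where "U = colmat v"
  have u: "unitary U" unfolding U_def by (rule unitary_colmat[OF on])
  define B where "B = U ** diagm (\<lambda>j. of_real (sqrt (d j))) ** adj U"
  have "psd B" unfolding B_def by (intro psd_conj psd_diagm) (simp add: d0)
  moreover have "B ** B = A"
  proof -
    have "B ** B = U ** (diagm (\<lambda>j. of_real (sqrt (d j))) ** (adj U ** (U **
        (diagm (\<lambda>j. of_real (sqrt (d j))) ** adj U))))"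
      unfolding B_def by (simp add: matrix_mul_assoc)
    also have "\<dots> = U ** (diagm (\<lambda>j. of_real (sqrt (d j)) * of_real (sqrt (d j))) ** adj U)"
      unfolding unitary_left[OF u] diagm_mult2 ..
    also have "(\<lambda>j. complex_of_real (sqrt (d j)) * of_real (sqrt (d j))) = (\<lambda>j. of_real (d j))"
    proof
      fix j
      have "sqrt (d j) * sqrt (d j) = d j" using d0[of j] by simp
      thus "complex_of_real (sqrt (d j)) * of_real (sqrt (d j)) = of_real (d j)"
        by (metis of_real_mult)
    qed
    also have "U ** (diagm (\<lambda>j. complex_of_real (d j)) ** adj U) = A"
      using herm_decomp[OF on eig] unfolding U_def by (simp add: matrix_mul_assoc)
    finally show ?thesis .
  qed
  ultimately show ?thesis by blast
qed

lemma sqrt_unique: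
  fixes B C :: "complex^'n^'n"
  assumes B: "psd B" and C: "psd C" and eq: "B ** B = C ** C"
  shows "B = C"
proof -
  obtain v :: "'n \<Rightarrow> complex^'n" and c where on: "orthonormal_on UNIV v"
    and eig: "\<forall>j. C *v v j = of_real (c j) *s v j"
    using spectral[OF psd_herm[OF C]] by blast
  have key: "B *v v j = of_real (c j) *s v j" for j
  proof -
    define w where "w = v j"
    define g where "g = c j"
    have g0: "0 \<le> g" unfolding g_def using psd_eig_nonneg[OF C on] eig by blast
    have Cw: "C *v w = of_real g *s w" unfolding w_def g_def using eig by blast
    have BBw: "B *v (B *v w) = (of_real g * of_real g) *s w"
    proof -
      have "B *v (B *v w) = (B ** B) *v w" by (simp add: matrix_vector_mul_assoc)
      also have "\<dots> = C *v (C *v w)" unfolding eq by (simp add: matrix_vector_mul_assoc)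
      also have "\<dots> = (of_real g * of_real g) *s w" unfolding Cw mv_scale by (simp add: Cw)
      finally show ?thesis .
    qed
    define y where "y = B *v w - of_real g *s w"
    have By: "B *v y = (- of_real g) *s y"
      unfolding y_def by (simp add: matrix_vector_mult_diff_distrib mv_scale BBw algebra_simps)
    have "cinner y (B *v y) = - of_real g * cinner y y" unfolding By cinner_scale_right by simp
    hence "Re (cinner y (B *v y)) = - g * (norm y)^2" unfolding cinner_self by simp
    hence le: "g * (norm y)^2 \<le> 0" using psd_quad[OF B, of y] by simp
    show ?thesis
    proof (cases "g = 0")
      case False
      hence "g > 0" using g0 by simp
      hence "(norm y)^2 \<le> 0" using le by (simp add: mult_le_0_iff)
      hence "y = 0" by simp
      thus ?thesis unfolding y_def w_def g_def by simp
    next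
      case True
      have hB: "adj B = B" by (rule psd_adj[OF B])
      have "cinner (B *v w) (B *v w) = cinner w (B *v (B *v w))"
        using cinner_adj[of w B "B *v w"] hB by simp
      also have "\<dots> = 0" unfolding BBw True by (simp add: cinner_scale_right)
      finally have "B *v w = 0" unfolding cinner_self_eq_0 .
      thus ?thesis unfolding w_def g_def[symmetric] True by simp
    qed
  qed
  have "B ** colmat v = C ** colmat v" unfolding mult_colmat using key eig by simp
  thus ?thesis by (rule unitary_cancel[OF unitary_colmat[OF on], rotated])
qed

lemma msqrt:
  assumes "psd A" shows "psd (msqrt A)" "msqrt A ** msqrt A = A"
proof -
  have "\<exists>!B. psd B \<and> B ** B = A"
    using sqrt_exists[OF assms] sqrt_unique by blast
  hence "psd (msqrt A) \<and> msqrt A ** msqrt A = A" unfolding msqrt_def by (rule theI')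
  thus "psd (msqrt A)" "msqrt A ** msqrt A = A" by auto
qed

lemma mtrace_basis:
  fixes v :: "'n \<Rightarrow> complex^'n"
  assumes on: "orthonormal_on UNIV v"
  shows "mtrace M = (\<Sum>j\<in>UNIV. cinner (v j) (M *v v j))"
proof -
  have u: "unitary (colmat v)" by (rule unitary_colmat[OF on])
  have "mtrace M = mtrace (M ** (colmat v ** adj (colmat v)))" using u unfolding unitary_def by simp
  also have "\<dots> = mtrace ((M ** colmat v) ** adj (colmat v))" by (simp only: matrix_mul_assoc)
  also have "\<dots> = mtrace (adj (colmat v) ** (M ** colmat v))" by (rule mtrace_comm)
  also have "\<dots> = (\<Sum>j\<in>UNIV. cinner (v j) (M *v v j))"
    unfolding mult_colmat[of M v] adj_colmat_colmat mtrace_def by simp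
  finally show ?thesis .
qed

lemma norm_mat_sq: "(norm (C::complex^'n^'n))^2 = Re (mtrace (C ** adj C))"
proof -
  have "mtrace (C ** adj C) = (\<Sum>i\<in>UNIV. cinner (C$i) (C$i))"
    unfolding mtrace_def matrix_matrix_mult_def cinner_def vec_lambda_beta adj_nth
    by (intro sum.cong refl) (rule mult.commute)
  also have "\<dots> = (\<Sum>i\<in>UNIV. of_real ((norm (C$i))^2))" unfolding cinner_self ..
  also have "\<dots> = of_real ((norm C)^2)" unfolding norm_vec_sq of_real_sum ..
  finally show ?thesis by simp
qed

lemma norm_adj: "norm (adj (C::complex^'n^'n)) = norm C"
proof -
  have "(norm (adj C))^2 = (norm C)^2"
    unfolding norm_mat_sq adj_adj using mtrace_comm[of "adj C" C] by simp
  thus ?thesis using power2_eq_imp_eq norm_ge_zero by blast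
qed

lemma trace_cs: "cmod (mtrace (C ** D)) \<le> norm C * norm (D::complex^'n^'n)"
proof -
  have "mtrace (C ** D) = (\<Sum>i\<in>UNIV. \<Sum>k\<in>UNIV. C$i$k * D$k$i)"
    unfolding mtrace_def matrix_matrix_mult_def by simp
  also have "\<dots> = (\<Sum>k\<in>UNIV. \<Sum>i\<in>UNIV. C$i$k * D$k$i)" by (rule sum.swap)
  also have "\<dots> = (\<Sum>k\<in>UNIV. cinner (adj C $ k) (D $ k))"
    unfolding cinner_def adj_nth complex_cnj_cnj ..
  finally have "cmod (mtrace (C ** D)) \<le> (\<Sum>k\<in>UNIV. cmod (cinner (adj C $ k) (D $ k)))"
    by (simp add: norm_sum)
  also have "\<dots> \<le> (\<Sum>k\<in>UNIV. norm (adj C $ k) * norm (D $ k))"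
    by (intro sum_mono cinner_cs)
  also have "\<dots> \<le> norm (adj C) * norm D" by (rule sum_norm_le_norm)
  finally show ?thesis unfolding norm_adj .
qed

lemma norm_unitary_mult:
  assumes "unitary U" shows "norm (U ** Z) = norm (Z::complex^'n^'n)"
proof -
  have "(norm (U ** Z))^2 = Re (mtrace (U ** (Z ** adj Z ** adj U)))"
    unfolding norm_mat_sq adj_mult by (simp add: matrix_mul_assoc)
  also have "\<dots> = Re (mtrace (Z ** adj Z ** adj U ** U))" using mtrace_comm by metis
  also have "\<dots> = (norm Z)^2" using assms unfolding unitary_def norm_mat_sq
    by (simp add: matrix_mul_assoc[symmetric])
  finally show ?thesis using power2_eq_imp_eq norm_ge_zero by blast
qed

lemma norm_unitary_mv:
  assumes "unitary W" shows "norm (W *v x) = norm x"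
proof -
  have "cinner (W *v x) (W *v x) = cinner x (adj W *v (W *v x))"
    using cinner_adj[of x "adj W" "W *v x"] by simp
  also have "\<dots> = cinner x x" using assms unfolding unitary_def
    by (simp add: matrix_vector_mul_assoc)
  finally have "of_real ((norm (W *v x))^2) = (of_real ((norm x)^2) :: complex)" unfolding cinner_self .
  hence "(norm (W *v x))^2 = (norm x)^2" by (simp only: of_real_eq_iff)
  thus ?thesis using power2_eq_imp_eq norm_ge_zero by blast
qed

lemma psd_mat1: "psd (mat 1 :: complex^'n^'n)"
  unfolding psd_iff hermitian_def by (simp add: cinner_self)

lemma psd_XX: "psd (X ** adj X)"
  using psd_conj[OF psd_mat1, of X] by simp

lemma herm0: "hermitian (0::complex^'n^'n)"
  unfolding hermitian_def adj_def by (simp add: vec_eq_iff)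

lemma fid_bounds:
  fixes X :: "complex^'n^'n"
  shows "(\<forall>W. unitary W \<longrightarrow> Re (mtrace (X ** W)) \<le> Re (mtrace (msqrt (X ** adj X))))
     \<and> (\<exists>V. unitary V \<and> mtrace (X ** V) = mtrace (msqrt (X ** adj X)))"
proof -
  define M where "M = X ** adj X"
  define S where "S = msqrt M"
  have psdS: "psd S" and SS: "S ** S = M" unfolding S_def M_def using msqrt[OF psd_XX] by auto
  obtain v :: "'n \<Rightarrow> complex^'n" and s where on: "orthonormal_on UNIV v"
    and eig: "\<forall>j. S *v v j = of_real (s j) *s v j"
    using spectral[OF psd_herm[OF psdS]] by blast
  have s0: "0 \<le> s j" for j using psd_eig_nonneg[OF psdS on, of j s] eig by blast
  have vv: "cinner (v i) (v j) = (if i = j then 1 else 0)" for i j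
    using on unfolding orthonormal_on_def by blast
  have Mv: "M *v v j = of_real (s j ^ 2) *s v j" for j
  proof -
    have "M *v v j = S *v (S *v v j)" unfolding SS[symmetric] by (simp add: matrix_vector_mul_assoc)
    also have "\<dots> = of_real (s j ^ 2) *s v j" using eig by (simp add: mv_scale power2_eq_square)
    finally show ?thesis .
  qed
  have XvXv: "cinner (adj X *v v i) (adj X *v v j) = of_real (s j ^ 2) * cinner (v i) (v j)" for i j
  proof -
    have "cinner (adj X *v v i) (adj X *v v j) = cinner (v i) (X *v (adj X *v v j))"
      using cinner_adj[of "v i" X "adj X *v v j"] by simp
    also have "\<dots> = cinner (v i) (M *v v j)" unfolding M_def by (simp add: matrix_vector_mul_assoc)
    also have "\<dots> = of_real (s j ^ 2) * cinner (v i) (v j)" unfolding Mv cinner_scale_right ..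
    finally show ?thesis .
  qed
  have nX: "norm (adj X *v v j) = s j" for j
  proof -
    have "of_real ((norm (adj X *v v j))^2) = (of_real (s j ^ 2) :: complex)"
      using XvXv[of j j] vv[of j j] unfolding cinner_self by simp
    hence "(norm (adj X *v v j))^2 = (s j)^2" by (simp only: of_real_eq_iff)
    thus ?thesis using power2_eq_imp_eq norm_ge_zero s0 by blast
  qed
  have trS: "mtrace S = (\<Sum>j\<in>UNIV. of_real (s j))"
    unfolding mtrace_basis[OF on, of S] using eig vv by (simp add: cinner_scale_right)
  have trXW: "mtrace (X ** W) = (\<Sum>j\<in>UNIV. cinner (adj X *v v j) (W *v v j))" for W
    unfolding mtrace_basis[OF on, of "X ** W"]
  proof (intro sum.cong refl)
    fix j
    show "cinner (v j) ((X ** W) *v v j) = cinner (adj X *v v j) (W *v v j)"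
      using cinner_adj[of "v j" X "W *v v j"] by (simp add: matrix_vector_mul_assoc)
  qed
  have partA: "Re (mtrace (X ** W)) \<le> Re (mtrace S)" if W: "unitary W" for W
  proof -
    have "Re (mtrace (X ** W)) = (\<Sum>j\<in>UNIV. Re (cinner (adj X *v v j) (W *v v j)))"
      unfolding trXW by (simp add: Re_sum)
    also have "\<dots> \<le> (\<Sum>j\<in>UNIV. s j)"
    proof (intro sum_mono)
      fix j
      have "Re (cinner (adj X *v v j) (W *v v j)) \<le> cmod (cinner (adj X *v v j) (W *v v j))"
        by (rule complex_Re_le_cmod)
      also have "\<dots> \<le> norm (adj X *v v j) * norm (W *v v j)" by (rule cinner_cs)
      also have "\<dots> = s j" unfolding nX norm_unitary_mv[OF W]
        using cinner_self_1[of "v j"] vv[of j j] by simp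
      finally show "Re (cinner (adj X *v v j) (W *v v j)) \<le> s j" .
    qed
    also have "\<dots> = Re (mtrace S)" unfolding trS by (simp add: Re_sum)
    finally show ?thesis .
  qed
  define J where "J = {j. 0 < s j}"
  define f where "f j = of_real (1 / s j) *s (adj X *v v j)" for j
  have onf: "orthonormal_on J f" unfolding orthonormal_on_def
  proof (intro ballI)
    fix i j assume i: "i \<in> J" and j: "j \<in> J"
    have "cinner (f i) (f j) = of_real (1 / s i) * of_real (1 / s j) * (of_real (s j ^ 2) * cinner (v i) (v j))"
      unfolding f_def cinner_scale_left cinner_scale_right XvXv by simp
    also have "\<dots> = (if i = j then 1 else 0)"
    proof (cases "i = j")
      case True
      have "s j > 0" using j unfolding J_def by simp
      hence "(1 / s j) * (1 / s j) * (s j ^ 2) = 1" by (simp add: power2_eq_square)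
      hence "of_real (1 / s j) * of_real (1 / s j) * (of_real (s j ^ 2) :: complex) = 1"
        by (metis of_real_1 of_real_mult)
      thus ?thesis using True vv[of j j] by simp
    next
      case False thus ?thesis using vv[of i j] by simp
    qed
    finally show "cinner (f i) (f j) = (if i = j then 1 else 0)" .
  qed
  obtain F :: "'n \<Rightarrow> complex^'n" and d' where F: "\<forall>j\<in>J. F j = f j" "orthonormal_on UNIV F"
    using eig_extend[OF herm0 onf, of "\<lambda>_. 0"] by auto
  define V where "V = colmat F ** adj (colmat v)"
  have uV: "unitary V" unfolding V_def
    by (intro unitary_mult unitary_adj unitary_colmat F(2) on)
  have Vv: "V *v v j = F j" for j
  proof -
    have "adj (colmat v) *v v j = axis j 1"
      unfolding vec_eq_iff adj_colmat_mv vv axis_def by simp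
    thus ?thesis unfolding V_def matrix_vector_mul_assoc[symmetric] by (simp add: colmat_mv_axis)
  qed
  have "mtrace (X ** V) = (\<Sum>j\<in>UNIV. of_real (s j))"
    unfolding trXW
  proof (intro sum.cong refl)
    fix j
    show "cinner (adj X *v v j) (V *v v j) = of_real (s j)"
    proof (cases "0 < s j")
      case True
      hence jJ: "j \<in> J" unfolding J_def by simp
      have "adj X *v v j = of_real (s j) *s f j"
        unfolding f_def using True by (simp add: vector_smult_assoc)
      hence "adj X *v v j = of_real (s j) *s F j" using F(1) jJ by simp
      moreover have "cinner (F j) (F j) = 1" using F(2) unfolding orthonormal_on_def by simp
      ultimately show ?thesis unfolding Vv by (simp add: cinner_scale_left)
    next
      case False
      hence "s j = 0" using s0[of j] by simp
      hence "adj X *v v j = 0" using nX[of j] by simp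
      thus ?thesis using \<open>s j = 0\<close> by simp
    qed
  qed
  hence "mtrace (X ** V) = mtrace S" unfolding trS .
  thus ?thesis using partA uV unfolding S_def M_def by blast
qed

lemma mult_diff_left: "(A::complex^'n^'m) ** (B - C) = A ** B - A ** C"
  by (simp add: vec_eq_iff matrix_matrix_mult_def sum_subtractf right_diff_distrib)

lemma mult_diff_right: "((A::complex^'n^'m) - B) ** C = A ** C - B ** C"
  by (simp add: vec_eq_iff matrix_matrix_mult_def sum_subtractf left_diff_distrib)

lemma norm_sqrt_eq: "(norm (C::complex^'n^'n))^2 = a \<Longrightarrow> norm C = sqrt a"
  using real_sqrt_abs[of "norm C"] by simp

theorem lemma8:
  fixes U P \<rho> \<sigma> :: "complex^'n^'n"
  assumes "unitary U" and "proj P"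
    and "P ** (U - mat 1) = U - mat 1"
    and "P ** U = U ** P"
    and "density \<rho>" and "density \<sigma>"
  shows "root_fid \<rho> \<sigma> - root_fid \<rho> (U ** \<sigma> ** adj U)
           \<le> 2 * sqrt (Re (mtrace (P ** \<rho>)) * Re (mtrace (P ** \<sigma>)))"
proof -
  have psdr: "psd \<rho>" and psds: "psd \<sigma>" using assms(5,6) unfolding density_def by auto
  define A where "A = msqrt \<rho>"
  define B where "B = msqrt \<sigma>"
  have AA: "A ** A = \<rho>" and hA: "adj A = A"
    unfolding A_def using msqrt[OF psdr] psd_adj by auto
  have BB: "B ** B = \<sigma>" and hB: "adj B = B"
    unfolding B_def using msqrt[OF psds] psd_adj by auto
  have PP: "P ** P = P" and hP: "adj P = P" using assms(2) unfolding proj_def by auto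
  define X where "X = A ** B"
  define Y where "Y = A ** U ** B"
  have XX: "X ** adj X = msqrt \<rho> ** \<sigma> ** msqrt \<rho>"
  proof -
    have "X ** adj X = A ** (B ** B) ** A"
      unfolding X_def adj_mult hA hB by (simp add: matrix_mul_assoc)
    thus ?thesis unfolding BB A_def .
  qed
  have YY: "Y ** adj Y = msqrt \<rho> ** (U ** \<sigma> ** adj U) ** msqrt \<rho>"
  proof -
    have "Y ** adj Y = A ** (U ** (B ** B) ** adj U) ** A"
      unfolding Y_def adj_mult hA hB by (simp add: matrix_mul_assoc)
    thus ?thesis unfolding BB A_def .
  qed
  obtain V where uV: "unitary V" and trV: "mtrace (X ** V) = mtrace (msqrt (X ** adj X))"
    using fid_bounds[of X] by blast
  have f1: "root_fid \<rho> \<sigma> = Re (mtrace (X ** V))"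
    unfolding root_fid_def trV XX ..
  have f2: "Re (mtrace (Y ** V)) \<le> root_fid \<rho> (U ** \<sigma> ** adj U)"
    using fid_bounds[of Y] uV unfolding root_fid_def YY by blast
  have I1: "P ** (mat 1 - U) = mat 1 - U"
  proof -
    have "P ** U - P = U - mat 1" using assms(3) by (simp add: mult_diff_left)
    moreover have "P ** (mat 1 - U) = P - P ** U" by (simp add: mult_diff_left)
    ultimately show ?thesis by (metis minus_diff_eq)
  qed
  have I2: "(mat 1 - U) ** P = mat 1 - U"
  proof -
    have "(mat 1 - U) ** P = P - U ** P" by (simp add: mult_diff_right)
    also have "\<dots> = P ** (mat 1 - U)" unfolding assms(4)[symmetric] by (simp add: mult_diff_left)
    finally show ?thesis using I1 by simp
  qed
  define Z where "Z = P ** B ** V"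
  have XY: "(X - Y) ** V = (A ** P) ** ((mat 1 - U) ** Z)"
  proof -
    have "X - Y = A ** (mat 1 - U) ** B"
      unfolding X_def Y_def by (simp add: mult_diff_left mult_diff_right)
    also have "\<dots> = A ** (P ** ((mat 1 - U) ** P)) ** B" unfolding I2 I1 ..
    finally show ?thesis unfolding Z_def by (simp add: matrix_mul_assoc)
  qed
  have nAP: "norm (A ** P) = sqrt (Re (mtrace (P ** \<rho>)))"
  proof (rule norm_sqrt_eq)
    have "A ** P ** adj (A ** P) = A ** ((P ** P) ** A)"
      unfolding adj_mult hA hP by (simp add: matrix_mul_assoc)
    also have "\<dots> = A ** (P ** A)" unfolding PP ..
    finally have "mtrace (A ** P ** adj (A ** P)) = mtrace ((P ** A) ** A)"
      using mtrace_comm by metis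
    also have "\<dots> = mtrace (P ** \<rho>)" unfolding AA[symmetric] by (simp add: matrix_mul_assoc)
    finally show "(norm (A ** P))^2 = Re (mtrace (P ** \<rho>))" unfolding norm_mat_sq by simp
  qed
  have nZ: "norm Z = sqrt (Re (mtrace (P ** \<sigma>)))"
  proof (rule norm_sqrt_eq)
    have "Z ** adj Z = P ** B ** (V ** adj V) ** B ** P"
      unfolding Z_def adj_mult hB hP by (simp add: matrix_mul_assoc)
    also have "\<dots> = (P ** \<sigma>) ** P" using uV unfolding unitary_def BB[symmetric]
      by (simp add: matrix_mul_assoc)
    finally have "mtrace (Z ** adj Z) = mtrace (P ** (P ** \<sigma>))" using mtrace_comm by metis
    also have "\<dots> = mtrace (P ** \<sigma>)" by (simp add: matrix_mul_assoc PP)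
    finally show "(norm Z)^2 = Re (mtrace (P ** \<sigma>))" unfolding norm_mat_sq by simp
  qed
  have nUZ: "norm ((mat 1 - U) ** Z) \<le> 2 * norm Z"
  proof -
    have "norm ((mat 1 - U) ** Z) = norm (Z - U ** Z)" by (simp add: mult_diff_right)
    also have "\<dots> \<le> norm Z + norm (U ** Z)" by (rule norm_triangle_ineq4)
    also have "\<dots> = 2 * norm Z" unfolding norm_unitary_mult[OF assms(1)] by simp
    finally show ?thesis .
  qed
  have "root_fid \<rho> \<sigma> - root_fid \<rho> (U ** \<sigma> ** adj U) \<le> Re (mtrace (X ** V)) - Re (mtrace (Y ** V))"
    using f1 f2 by linarith
  also have "\<dots> = Re (mtrace ((X - Y) ** V))" by (simp add: mult_diff_right mtrace_diff)
  also have "\<dots> \<le> cmod (mtrace ((X - Y) ** V))" by (rule complex_Re_le_cmod)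
  also have "\<dots> \<le> norm (A ** P) * norm ((mat 1 - U) ** Z)" unfolding XY by (rule trace_cs)
  also have "\<dots> \<le> norm (A ** P) * (2 * norm Z)" by (rule mult_left_mono[OF nUZ norm_ge_zero])
  also have "\<dots> = 2 * sqrt (Re (mtrace (P ** \<rho>)) * Re (mtrace (P ** \<sigma>)))"
    unfolding nAP nZ real_sqrt_mult by simp
  finally show ?thesis .
qed

end
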